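(* The language classes $\mathbf{CF}$ and $\mathbf{GRLOWJ}$ are incomparable, i.e., $\mathbf{CF}\not\subseteq\mathbf{GRLOWJ}$ and $\mathbf{GRLOWJ}\not\subseteq\mathbf{CF}$.
   Context: $\mathbf{CF}$ is the class of context-free languages. "Subword" means a contiguous factor. A GRLOWJFA is a tuple $\mathcal{A}=(\Sigma,Q,q_0,F,R)$ with $\Sigma$ a finite alphabet, $Q$ a finite state set, $q_0\in Q$, $F\subseteq Q$, and $R\subset Q\times\Sigma^+\times Q$ a finite set of rules such that for each $p\in Q$, $w\in\Sigma^+$ at most one $q$ has $(p,w,q)\in R$ (meaning: go from $p$ to $q$ deleting $w$). $\Sigma_p=\{w:(p,w,q)\in R\text{ for some }q\}$. Configurations lie in $\Sigma^*Q\Sigma^*$. Moves $\curvearrowright$: (1) for $t,u,v\in\Sigma^*$ and $(p,x,q)\in R$: $tpuxv\curvearrowright tuqv$ provided $u$ contains no word of $\Sigma_p$ as a subword and there are no $u_1,x_2\in\Sigma^*$, $u_2,x_1\in\Sigma^+$ with $u=u_1u_2$, $x=x_1x_2$, $u_2x_1=x$; (2) for $x\in\Sigma^+$, $y\in\Sigma^*$ with $y$ containing no word of $\Sigma_p$ as a subword: $xpy\curvearrowright pxy$. $L_{GRL}(\mathcal{A})=\{w\in\Sigma^*: q_0w\curvearrowright^* q_f \text{ for some } q_f\in F\}$. $\mathbf{GRLOWJ}$ is the class of languages so accepted. *)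

theory Defs
  imports Main
begin

(* Letters, states and nonterminals are drawn from nat; every finite alphabet
   embeds into nat, so language classes are sets of languages over finite
   subsets of nat. *)

definition subword :: "'a list \<Rightarrow> 'a list \<Rightarrow> bool" where
  "subword y u \<longleftrightarrow> (\<exists>a b. u = a @ y @ b)"

record cfg =
  nonterms :: "nat set"
  terms    :: "nat set"
  prods    :: "(nat \<times> (nat + nat) list) set"
  start    :: nat

definition wf_cfg :: "cfg \<Rightarrow> bool" where
  "wf_cfg G \<longleftrightarrow> finite (nonterms G) \<and> finite (terms G) \<and> finite (prods G)
     \<and> start G \<in> nonterms G
     \<and> (\<forall>(A, \<alpha>) \<in> prods G. A \<in> nonterms G \<and>
           set \<alpha> \<subseteq> Inl ` nonterms G \<union> Inr ` terms G)"

definition cfg_step :: "cfg \<Rightarrow> ((nat + nat) list \<times> (nat + nat) list) set" where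
  "cfg_step G = {(u @ [Inl A] @ v, u @ \<alpha> @ v) | u v A \<alpha>. (A, \<alpha>) \<in> prods G}"

definition cfg_lang :: "cfg \<Rightarrow> nat list set" where
  "cfg_lang G = {w. w \<in> lists (terms G) \<and> ([Inl (start G)], map Inr w) \<in> (cfg_step G)\<^sup>*}"

definition CF :: "nat list set set" where
  "CF = {L. \<exists>G. wf_cfg G \<and> L = cfg_lang G}"

record grlowjfa =
  alph  :: "nat set"
  states :: "nat set"
  init  :: nat
  finals :: "nat set"
  rules :: "(nat \<times> nat list \<times> nat) set"

definition wf_grlowjfa :: "grlowjfa \<Rightarrow> bool" where
  "wf_grlowjfa A \<longleftrightarrow> finite (alph A) \<and> finite (states A) \<and> init A \<in> states A
     \<and> finals A \<subseteq> states A \<and> finite (rules A)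
     \<and> (\<forall>(p, w, q) \<in> rules A. p \<in> states A \<and> q \<in> states A \<and> w \<noteq> [] \<and> w \<in> lists (alph A))
     \<and> (\<forall>p w q q'. (p, w, q) \<in> rules A \<longrightarrow> (p, w, q') \<in> rules A \<longrightarrow> q = q')"

definition rule_words :: "grlowjfa \<Rightarrow> nat \<Rightarrow> nat list set" where
  "rule_words A p = {w. \<exists>q. (p, w, q) \<in> rules A}"

type_synonym config = "nat list \<times> nat \<times> nat list"

definition no_rule_subword :: "grlowjfa \<Rightarrow> nat \<Rightarrow> nat list \<Rightarrow> bool" where
  "no_rule_subword A p u \<longleftrightarrow> (\<forall>w \<in> rule_words A p. \<not> subword w u)"

definition grl_move :: "grlowjfa \<Rightarrow> (config \<times> config) set" where
  "grl_move A =
     {((t, p, u @ x @ v), (t @ u, q, v)) | t u v x p q.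
        (p, x, q) \<in> rules A \<and> no_rule_subword A p u \<and>
        \<not> (\<exists>u1 u2 x1 x2. u2 \<noteq> [] \<and> x1 \<noteq> [] \<and> u = u1 @ u2 \<and> x = x1 @ x2 \<and> u2 @ x1 = x)}
   \<union> {((x, p, y), ([], p, x @ y)) | x y p. x \<noteq> [] \<and> no_rule_subword A p y}"

definition grl_lang :: "grlowjfa \<Rightarrow> nat list set" where
  "grl_lang A = {w. w \<in> lists (alph A) \<and>
      (\<exists>qf \<in> finals A. (([], init A, w), ([], qf, [])) \<in> (grl_move A)\<^sup>*)}"

definition GRLOWJ :: "nat list set set" where
  "GRLOWJ = {L. \<exists>A. wf_grlowjfa A \<and> L = grl_lang A}"

end

theory Submission
  imports Defs
begin

datatype tree = Lf nat | Nd nat "tree list"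

fun root :: "tree \<Rightarrow> nat + nat" where
  "root (Lf a) = Inr a" | "root (Nd A ts) = Inl A"

fun yield :: "tree \<Rightarrow> nat list" where
  "yield (Lf a) = [a]" | "yield (Nd A ts) = concat (map yield ts)"

fun valid :: "cfg \<Rightarrow> tree \<Rightarrow> bool" where
  "valid G (Lf a) = (a \<in> terms G)"
| "valid G (Nd A ts) = ((A, map root ts) \<in> prods G \<and> (\<forall>t \<in> set ts. valid G t))"

fun height :: "tree \<Rightarrow> nat" where
  "height (Lf a) = 0" | "height (Nd A ts) = Suc (foldr max (map height ts) 0)"

fun sz :: "tree \<Rightarrow> nat" where
  "sz (Lf a) = 1" | "sz (Nd A ts) = Suc (sum_list (map sz ts))"

fun labels :: "tree \<Rightarrow> nat set" where
  "labels (Lf a) = {}" | "labels (Nd A ts) = insert A (\<Union> (set (map labels ts)))"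

inductive occ :: "tree \<Rightarrow> tree \<Rightarrow> nat list \<Rightarrow> nat list \<Rightarrow> bool" where
  occ_refl: "occ t t [] []"
| occ_step: "occ c s u z \<Longrightarrow> occ (Nd A (ts1 @ c # ts2)) s (concat (map yield ts1) @ u) (z @ concat (map yield ts2))"

lemma occ_yield: "occ t s u z \<Longrightarrow> yield t = u @ yield s @ z"
  by (induction rule: occ.induct) auto

lemma occ_valid: "occ t s u z \<Longrightarrow> valid G t \<Longrightarrow> valid G s"
  by (induction rule: occ.induct) auto

lemma occ_trans: "occ t s u z \<Longrightarrow> occ s r u' z' \<Longrightarrow> occ t r (u @ u') (z' @ z)"
proof (induction rule: occ.induct)
  case (occ_refl t) then show ?case by simp
next
  case (occ_step c s u z A ts1 ts2)
  from occ.occ_step[OF occ_step.IH[OF occ_step.prems], of A ts1 ts2] show ?case by simp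
qed

lemma sz_sum_le: "c \<in> set ts \<Longrightarrow> sz c \<le> sum_list (map sz ts)"
  by (induction ts) auto

lemma occ_sz: "occ t s u z \<Longrightarrow> sz s \<le> sz t"
  by (induction rule: occ.induct) auto

lemma occ_replace: "occ t s u z \<Longrightarrow> valid G t \<Longrightarrow> valid G s' \<Longrightarrow> root s' = root s \<Longrightarrow>
  \<exists>t'. valid G t' \<and> root t' = root t \<and> yield t' = u @ yield s' @ z \<and> sz t' + sz s = sz t + sz s'"
proof (induction rule: occ.induct)
  case (occ_refl t) then show ?case by auto
next
  case (occ_step c s u z A ts1 ts2)
  then obtain c' where c': "valid G c'" "root c' = root c" "yield c' = u @ yield s' @ z" "sz c' + sz s = sz c + sz s'"
    by auto
  show ?case
    using occ_step.prems c' by (intro exI[of _ "Nd A (ts1 @ c' # ts2)"]) auto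
qed

lemma labels_occ: "A \<in> labels t \<Longrightarrow> \<exists>s u z. occ t s u z \<and> root s = Inl A"
proof (induction t)
  case (Lf x) then show ?case by simp
next
  case (Nd B ts)
  show ?case
  proof (cases "A = B")
    case True then show ?thesis by (intro exI[of _ "Nd B ts"]) (auto intro: occ_refl)
  next
    case False
    then obtain c where c: "c \<in> set ts" "A \<in> labels c" using Nd.prems by auto
    then obtain s u z where "occ c s u z" "root s = Inl A" using Nd.IH by blast
    moreover obtain ts1 ts2 where "ts = ts1 @ c # ts2" using split_list[OF c(1)] by blast
    ultimately show ?thesis using occ_step by blast
  qed
qed

definition nested :: "tree \<Rightarrow> bool" where
  "nested t \<longleftrightarrow> (\<exists>B t1 u z t2 v y. occ t t1 u z \<and> root t1 = Inl B \<and> occ t1 t2 v y \<and> root t2 = Inl B \<and> sz t2 < sz t1)"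

lemma foldr_max_ge: "foldr max (map f xs) (0::nat) \<ge> k \<Longrightarrow> k \<ge> 1 \<Longrightarrow> \<exists>x\<in>set xs. f x \<ge> k"
  by (induction xs) (auto simp: le_max_iff_disj)

lemma foldr_max_le: "x \<in> set xs \<Longrightarrow> f x \<le> foldr max (map f xs) (0::nat)"
  by (induction xs) (auto simp: le_max_iff_disj)

lemma height_nested: "finite X \<Longrightarrow> labels t \<subseteq> X \<Longrightarrow> card X < height t \<Longrightarrow> nested t"
proof (induction t arbitrary: X)
  case (Lf x) then show ?case by simp
next
  case (Nd A ts)
  have AX: "A \<in> X" using Nd.prems by auto
  have cX: "card X \<ge> 1" using card_gt_0_iff[of X] AX Nd.prems(1) by auto
  have "foldr max (map height ts) 0 \<ge> card X" using Nd.prems by simp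
  then obtain c where c: "c \<in> set ts" "height c \<ge> card X" using foldr_max_ge cX by blast
  obtain ts1 ts2 where ts: "ts = ts1 @ c # ts2" using split_list[OF c(1)] by blast
  show ?case
  proof (cases "A \<in> labels c")
    case True
    then obtain s u z where s: "occ c s u z" "root s = Inl A" using labels_occ by blast
    have o1: "occ (Nd A ts) s (concat (map yield ts1) @ u) (z @ concat (map yield ts2))"
      using occ_step[OF s(1)] ts by simp
    have o2: "sz s < sz (Nd A ts)" using occ_sz[OF s(1)] sz_sum_le[OF c(1)] by simp
    have o3: "root (Nd A ts) = Inl A" by simp
    show ?thesis unfolding nested_def using occ_refl[of "Nd A ts"] o1 o2 o3 s(2) by blast
  next
    case False
    then have "labels c \<subseteq> X - {A}" using Nd.prems c by auto
    moreover have "card (X - {A}) < height c" using AX Nd.prems(1) c cX by simp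
    ultimately have "nested c" using Nd.IH[OF c(1)] Nd.prems(1) by blast
    then obtain B t1 u z t2 v y where h: "occ c t1 u z" "root t1 = Inl B" "occ t1 t2 v y" "root t2 = Inl B" "sz t2 < sz t1"
      unfolding nested_def by blast
    have "occ (Nd A ts) t1 (concat (map yield ts1) @ u) (z @ concat (map yield ts2))"
      using occ_step[OF h(1)] ts by simp
    then show ?thesis unfolding nested_def using h by blast
  qed
qed

lemma len_children: "valid G (Nd A ts) \<Longrightarrow> \<forall>(A,\<alpha>) \<in> prods G. length \<alpha> \<le> m \<Longrightarrow> length ts \<le> m"
proof -
  assume v: "valid G (Nd A ts)" and m: "\<forall>(A,\<alpha>) \<in> prods G. length \<alpha> \<le> m"
  then have "(A, map root ts) \<in> prods G" by simp
  then have "length (map root ts) \<le> m" using m by fastforce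
  then show ?thesis by simp
qed

lemma sum_list_bound: "(\<forall>x\<in>set xs. f x \<le> (B::nat)) \<Longrightarrow> sum_list (map f xs) \<le> length xs * B"
  by (induction xs) auto

lemma yield_bound:
  assumes m: "\<forall>(A,\<alpha>) \<in> prods G. length \<alpha> \<le> m" and m1: "m \<ge> 1"
  shows "valid G t \<Longrightarrow> length (yield t) \<le> m ^ height t"
proof (induction t)
  case (Lf x) then show ?case by simp
next
  case (Nd A ts)
  let ?h = "foldr max (map height ts) 0"
  have "\<forall>c\<in>set ts. length (yield c) \<le> m ^ ?h"
  proof
    fix c assume c: "c \<in> set ts"
    then have "length (yield c) \<le> m ^ height c" using Nd by auto
    also have "\<dots> \<le> m ^ ?h" using foldr_max_le[OF c] m1 by (simp add: power_increasing)
    finally show "length (yield c) \<le> m ^ ?h" .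
  qed
  then have "sum_list (map (\<lambda>c. length (yield c)) ts) \<le> length ts * m ^ ?h"
    by (rule sum_list_bound)
  moreover have "length ts \<le> m" using len_children[OF Nd.prems m] .
  ultimately have "sum_list (map (\<lambda>c. length (yield c)) ts) \<le> m * m ^ ?h"
    by (meson le_trans mult_le_mono1)
  then show ?case by (simp add: length_concat comp_def)
qed

lemma long_sub: "(P::nat) \<ge> 1 \<Longrightarrow> length (yield t) > P \<Longrightarrow>
  \<exists>s u z A ts. occ t s u z \<and> s = Nd A ts \<and> length (yield s) > P \<and> (\<forall>c\<in>set ts. length (yield c) \<le> P)"
proof (induction t)
  case (Lf x) then show ?case by simp
next
  case (Nd A ts)
  show ?case
  proof (cases "\<exists>c\<in>set ts. length (yield c) > P")
    case True
    then obtain c where c: "c \<in> set ts" "length (yield c) > P" by blast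
    then obtain s u z B ts' where h: "occ c s u z" "s = Nd B ts'" "length (yield s) > P" "\<forall>c\<in>set ts'. length (yield c) \<le> P"
      using Nd by blast
    obtain ts1 ts2 where "ts = ts1 @ c # ts2" using split_list[OF c(1)] by blast
    then show ?thesis using occ_step[OF h(1)] h by blast
  next
    case False
    then show ?thesis using Nd.prems by (intro exI[of _ "Nd A ts"]) (auto intro: occ_refl)
  qed
qed

lemma valid_labels: "wf_cfg G \<Longrightarrow> valid G t \<Longrightarrow> labels t \<subseteq> nonterms G"
  by (induction t) (auto simp: wf_cfg_def)

lemma pump_down:
  assumes wf: "wf_cfg G" and m: "\<forall>(A,\<alpha>) \<in> prods G. length \<alpha> \<le> m" and m1: "m \<ge> 1"
  defines "P \<equiv> m ^ card (nonterms G)"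
  shows "valid G t \<Longrightarrow> root t = Inl S \<Longrightarrow> length (yield t) > P \<Longrightarrow>
    \<exists>u v x y z. yield t = u @ v @ x @ y @ z \<and> v @ y \<noteq> [] \<and> length (v @ x @ y) \<le> m * P \<and>
       (\<exists>t'. valid G t' \<and> root t' = Inl S \<and> yield t' = u @ x @ z)"
proof (induction "sz t" arbitrary: t rule: less_induct)
  case less
  have P1: "P \<ge> 1" unfolding P_def using m1 by simp
  obtain s u0 z0 A ts where s: "occ t s u0 z0" "s = Nd A ts" "length (yield s) > P" "\<forall>c\<in>set ts. length (yield c) \<le> P"
    using long_sub[OF P1 less.prems(3)] by blast
  have vs: "valid G s" using occ_valid[OF s(1) less.prems(1)] .
  have "sum_list (map (\<lambda>c. length (yield c)) ts) \<le> length ts * P" using s(4) by (rule sum_list_bound)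
  moreover have "length ts \<le> m" using len_children m vs s(2) by blast
  ultimately have ys: "length (yield s) \<le> m * P" using s(2)
    by (simp add: length_concat comp_def) (meson le_trans mult_le_mono1)
  have "card (nonterms G) < height s"
  proof (rule ccontr)
    assume "\<not> ?thesis"
    then have "m ^ height s \<le> P" unfolding P_def using m1 by (simp add: power_increasing)
    moreover have "length (yield s) \<le> m ^ height s" using yield_bound[OF m m1 vs] .
    ultimately show False using s(3) by simp
  qed
  moreover have "finite (nonterms G)" using wf by (simp add: wf_cfg_def)
  ultimately have "nested s" using height_nested valid_labels[OF wf vs] by blast
  then obtain B t1 u1 z1 t2 v y where h: "occ s t1 u1 z1" "root t1 = Inl B" "occ t1 t2 v y" "root t2 = Inl B" "sz t2 < sz t1"
    unfolding nested_def by blast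
  have ot: "occ t t1 (u0 @ u1) (z1 @ z0)" using occ_trans[OF s(1) h(1)] .
  have vt2: "valid G t2" using occ_valid[OF h(3) occ_valid[OF ot less.prems(1)]] .
  obtain t' where t': "valid G t'" "root t' = root t" "yield t' = (u0 @ u1) @ yield t2 @ (z1 @ z0)" "sz t' + sz t1 = sz t + sz t2"
    using occ_replace[OF ot less.prems(1) vt2] h by auto
  have yt: "yield t = (u0 @ u1) @ v @ yield t2 @ y @ (z1 @ z0)"
    using occ_yield[OF ot] occ_yield[OF h(3)] by simp
  have l1: "length (v @ yield t2 @ y) \<le> m * P"
    using occ_yield[OF h(1)] occ_yield[OF h(3)] ys by simp
  show ?case
  proof (cases "v @ y = []")
    case False
    then show ?thesis using yt l1 t' less.prems by (intro exI[of _ "u0 @ u1"] exI[of _ v] exI[of _ "yield t2"] exI[of _ y] exI[of _ "z1 @ z0"]) auto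
  next
    case True
    then have "yield t' = yield t" using yt t'(3) by simp
    moreover have "sz t' < sz t" using t'(4) h(5) by simp
    ultimately show ?thesis using less.hyps[of t'] t' less.prems by auto
  qed
qed


lemma step_ctx: "(x, y) \<in> cfg_step G \<Longrightarrow> (u @ x @ v, u @ y @ v) \<in> cfg_step G"
proof -
  assume "(x, y) \<in> cfg_step G"
  then obtain u' v' A \<alpha> where h: "x = u' @ [Inl A] @ v'" "y = u' @ \<alpha> @ v'" "(A, \<alpha>) \<in> prods G"
    unfolding cfg_step_def by blast
  have "(u @ x @ v, u @ y @ v) = ((u @ u') @ [Inl A] @ (v' @ v), (u @ u') @ \<alpha> @ (v' @ v))"
    using h by simp
  then show ?thesis unfolding cfg_step_def using h(3) by blast
qed

lemma steps_ctx: "(x, y) \<in> (cfg_step G)\<^sup>* \<Longrightarrow> (u @ x @ v, u @ y @ v) \<in> (cfg_step G)\<^sup>*"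
proof (induction rule: rtrancl_induct)
  case base then show ?case by simp
next
  case (step y z) then show ?case using step_ctx[of y z G u v] by (meson rtrancl.rtrancl_into_rtrancl)
qed

lemma list_derives: "(\<forall>t\<in>set ts. ([root t], map Inr (yield t)) \<in> (cfg_step G)\<^sup>*) \<Longrightarrow>
  (map root ts, map Inr (concat (map yield ts))) \<in> (cfg_step G)\<^sup>*"
proof (induction ts)
  case Nil then show ?case by simp
next
  case (Cons t ts)
  have 1: "([root t] @ map root ts, map Inr (yield t) @ map root ts) \<in> (cfg_step G)\<^sup>*"
    using steps_ctx[of "[root t]" "map Inr (yield t)" G "[]" "map root ts"] Cons.prems by simp
  have 2: "(map Inr (yield t) @ map root ts, map Inr (yield t) @ map Inr (concat (map yield ts))) \<in> (cfg_step G)\<^sup>*"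
    using steps_ctx[of "map root ts" _ G "map Inr (yield t)" "[]"] Cons by simp
  show ?case using rtrancl_trans[OF 1 2] by simp
qed

lemma valid_derives: "valid G t \<Longrightarrow> ([root t], map Inr (yield t)) \<in> (cfg_step G)\<^sup>*"
proof (induction t)
  case (Lf x) then show ?case by simp
next
  case (Nd A ts)
  have s1: "([Inl A], map root ts) \<in> cfg_step G"
  proof -
    have "([] @ [Inl A] @ [], [] @ map root ts @ []) \<in> cfg_step G"
      unfolding cfg_step_def using Nd.prems by fastforce
    then show ?thesis by simp
  qed
  have "(map root ts, map Inr (concat (map yield ts))) \<in> (cfg_step G)\<^sup>*"
    using Nd by (intro list_derives) auto
  then show ?case using s1 by (simp add: converse_rtrancl_into_rtrancl)
qed

lemma valid_terms: "valid G t \<Longrightarrow> set (yield t) \<subseteq> terms G"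
  by (induction t) auto

lemma tree_in_lang: "valid G t \<Longrightarrow> root t = Inl (start G) \<Longrightarrow> yield t \<in> cfg_lang G"
  unfolding cfg_lang_def using valid_derives[of G t] valid_terms[of G t] by auto

lemma steps_trees: "(\<alpha>, \<beta>) \<in> (cfg_step G)\<^sup>* \<Longrightarrow> \<beta> = map root ts \<Longrightarrow> (\<forall>t\<in>set ts. valid G t) \<Longrightarrow>
  \<exists>ts'. map root ts' = \<alpha> \<and> (\<forall>t\<in>set ts'. valid G t) \<and> concat (map yield ts') = concat (map yield ts)"
proof (induction rule: converse_rtrancl_induct)
  case base then show ?case by blast
next
  case (step y z)
  then obtain ts' where ts': "map root ts' = z" "\<forall>t\<in>set ts'. valid G t" "concat (map yield ts') = concat (map yield ts)"
    by blast
  from step.hyps(1) obtain u v A \<gamma> where h: "y = u @ [Inl A] @ v" "z = u @ \<gamma> @ v" "(A, \<gamma>) \<in> prods G"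
    unfolding cfg_step_def by blast
  from ts'(1) h(2) obtain ts1 ts23 where a: "ts' = ts1 @ ts23" "map root ts1 = u" "map root ts23 = \<gamma> @ v"
    by (metis map_eq_append_conv)
  from a(3) obtain ts2 ts3 where b: "ts23 = ts2 @ ts3" "map root ts2 = \<gamma>" "map root ts3 = v"
    by (metis map_eq_append_conv)
  show ?case
    using ts' a b h by (intro exI[of _ "ts1 @ [Nd A ts2] @ ts3"]) auto
qed

lemma lang_tree: "w \<in> cfg_lang G \<Longrightarrow> \<exists>t. valid G t \<and> root t = Inl (start G) \<and> yield t = w"
proof -
  assume w: "w \<in> cfg_lang G"
  then have d: "([Inl (start G)], map Inr w) \<in> (cfg_step G)\<^sup>*" and wt: "w \<in> lists (terms G)"
    unfolding cfg_lang_def by auto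
  have e1: "map Inr w = map root (map Lf w)" by (simp add: comp_def)
  have e2: "\<forall>t\<in>set (map Lf w). valid G t" using wt by auto
  from steps_trees[OF d e1 e2] obtain ts' where ts': "map root ts' = [Inl (start G)]" "\<forall>t\<in>set ts'. valid G t"
     "concat (map yield ts') = concat (map yield (map Lf w))"
    by (elim exE conjE)
  then obtain t where "ts' = [t]" by (cases ts') auto
  moreover have "concat (map yield (map Lf w)) = w" by (induction w) auto
  ultimately show ?thesis using ts' by auto
qed


definition cnt :: "nat \<Rightarrow> nat list \<Rightarrow> nat" where
  "cnt a w = length (filter (\<lambda>x. x = a) w)"

lemma cnt_simps[simp]: "cnt a [] = 0" "cnt a (x # w) = (if x = a then Suc (cnt a w) else cnt a w)"
  "cnt a (w1 @ w2) = cnt a w1 + cnt a w2" "cnt a (replicate n b) = (if a = b then n else 0)"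
  by (auto simp: cnt_def)

definition A0 :: grlowjfa where
  "A0 = \<lparr>alph = {0,1,2}, states = {0,1,2}, init = 0, finals = {0},
         rules = {(0,[0],1),(1,[1],2),(2,[2],0)}\<rparr>"

lemma wf_A0: "wf_grlowjfa A0"
  unfolding wf_grlowjfa_def A0_def by auto

lemma rw_A0: "rule_words A0 p = (if p = 0 then {[0]} else if p = 1 then {[1]} else if p = 2 then {[2]} else {})"
  unfolding rule_words_def A0_def by auto

lemma subword_set: "subword w u \<Longrightarrow> set w \<subseteq> set u"
  unfolding subword_def by auto

lemma subword_Nil: "subword [] u"
  unfolding subword_def by auto

lemma del1: "(p,[x],q) \<in> rules A \<Longrightarrow> no_rule_subword A p u \<Longrightarrow>
  ((t, p, u @ [x] @ v), (t @ u, q, v)) \<in> grl_move A"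
proof -
  assume a: "(p,[x],q) \<in> rules A" "no_rule_subword A p u"
  have "\<not> (\<exists>u1 u2 x1 x2. u2 \<noteq> [] \<and> x1 \<noteq> [] \<and> u = u1 @ u2 \<and> [x] = x1 @ x2 \<and> u2 @ x1 = [x])"
    by (auto simp: append_eq_Cons_conv)
  then show ?thesis unfolding grl_move_def using a by blast
qed

lemma jump: "t \<noteq> [] \<Longrightarrow> no_rule_subword A p s \<Longrightarrow> ((t, p, s), ([], p, t @ s)) \<in> grl_move A"
  unfolding grl_move_def by blast

definition abc :: "nat \<Rightarrow> nat list" where
  "abc n = replicate n 0 @ replicate n 1 @ replicate n 2"

lemma nrs_A0: "set u \<subseteq> {a. a \<noteq> x} \<Longrightarrow> rule_words A0 p \<subseteq> {[x]} \<Longrightarrow> no_rule_subword A0 p u"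
  unfolding no_rule_subword_def using subword_set by fastforce

lemma A0_acc: "(([], 0, abc n), ([], 0, [])) \<in> (grl_move A0)\<^sup>*"
proof (induction n)
  case 0 then show ?case by (simp add: abc_def)
next
  case (Suc k)
  have r: "(0,[0],1) \<in> rules A0" "(1,[1],2) \<in> rules A0" "(2,[2],0) \<in> rules A0" by (auto simp: A0_def)
  have s1: "(([], 0, [] @ [0] @ (replicate k 0 @ replicate (Suc k) 1 @ replicate (Suc k) 2)),
            ([] @ [], 1, replicate k 0 @ replicate (Suc k) 1 @ replicate (Suc k) 2)) \<in> grl_move A0"
    by (rule del1[OF r(1)]) (simp add: no_rule_subword_def rw_A0 subword_def)
  have s2: "(([], 1, replicate k 0 @ [1] @ (replicate k 1 @ replicate (Suc k) 2)),
            ([] @ replicate k 0, 2, replicate k 1 @ replicate (Suc k) 2)) \<in> grl_move A0"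
    by (rule del1[OF r(2)]) (rule nrs_A0, auto simp: rw_A0)
  have s3: "((replicate k 0, 2, replicate k 1 @ [2] @ replicate k 2),
            (replicate k 0 @ replicate k 1, 0, replicate k 2)) \<in> grl_move A0"
    by (rule del1[OF r(3)]) (rule nrs_A0, auto simp: rw_A0)
  have e1: "abc (Suc k) = [] @ [0] @ (replicate k 0 @ replicate (Suc k) 1 @ replicate (Suc k) 2)"
    by (simp add: abc_def)
  have e2: "replicate k 0 @ replicate (Suc k) 1 @ replicate (Suc k) 2 = replicate k 0 @ [1] @ (replicate k 1 @ replicate (Suc k) 2)"
    by (simp add: replicate_app_Cons_same)
  have e3: "replicate k 1 @ replicate (Suc k) 2 = replicate k 1 @ [2] @ replicate k 2"
    by (simp add: replicate_app_Cons_same)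
  have A: "(([], 0, abc (Suc k)), (replicate k 0 @ replicate k 1, 0, replicate k 2)) \<in> (grl_move A0)\<^sup>*"
    using s1 s2 s3 unfolding e1 e2 e3 by simp
  show ?case
  proof (cases k)
    case 0 then show ?thesis using A by simp
  next
    case (Suc j)
    have nr: "no_rule_subword A0 0 (replicate k 2)" by (rule nrs_A0) (auto simp: rw_A0)
    have "((replicate k 0 @ replicate k 1, 0, replicate k 2), ([], 0, abc k)) \<in> grl_move A0"
      using jump[of "replicate k 0 @ replicate k 1" A0 0 "replicate k 2"] Suc nr
      by (simp add: abc_def)
    then show ?thesis using A Suc.IH by (meson rtrancl_into_rtrancl rtrancl_trans r_into_rtrancl)
  qed
qed

definition Inv :: "config \<Rightarrow> bool" where
  "Inv c = (case c of (t, p, s) \<Rightarrow> let w = t @ s in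
     (p = 0 \<and> cnt 0 w = cnt 1 w \<and> cnt 1 w = cnt 2 w) \<or>
     (p = 1 \<and> cnt 0 w + 1 = cnt 1 w \<and> cnt 1 w = cnt 2 w) \<or>
     (p = 2 \<and> cnt 0 w + 1 = cnt 2 w \<and> cnt 1 w + 1 = cnt 2 w))"

lemma Inv_back: "(c, ([], 0, [])) \<in> (grl_move A0)\<^sup>* \<Longrightarrow> Inv c"
proof (induction rule: converse_rtrancl_induct)
  case base then show ?case by (simp add: Inv_def)
next
  case (step y z)
  from step.hyps(1) show ?case
  proof (unfold grl_move_def, elim UnE CollectE exE conjE)
    fix t u v x p q
    assume h: "(y, z) = ((t, p, u @ x @ v), t @ u, q, v)" "(p, x, q) \<in> rules A0"
    have "(p = 0 \<and> x = [0] \<and> q = 1) \<or> (p = 1 \<and> x = [1] \<and> q = 2) \<or> (p = 2 \<and> x = [2] \<and> q = 0)"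
      using h(2) by (auto simp: A0_def)
    then show "Inv y" using step.IH h(1) by (auto simp: Inv_def Let_def)
  next
    fix x yy p
    assume h: "(y, z) = ((x, p, yy), [], p, x @ yy)"
    then show "Inv y" using step.IH by (auto simp: Inv_def Let_def)
  qed
qed

lemma A0_lang_cnt: "w \<in> grl_lang A0 \<Longrightarrow> cnt 0 w = cnt 1 w \<and> cnt 1 w = cnt 2 w"
proof -
  assume "w \<in> grl_lang A0"
  then have "(([], 0, w), ([], 0, [])) \<in> (grl_move A0)\<^sup>*" unfolding grl_lang_def by (auto simp: A0_def)
  then have "Inv ([], 0, w)" by (rule Inv_back)
  then show ?thesis by (simp add: Inv_def)
qed

lemma abc_in: "abc n \<in> grl_lang A0"
  unfolding grl_lang_def using A0_acc[of n] by (auto simp: A0_def abc_def)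

lemma cnt_zero: "a \<notin> set l \<Longrightarrow> cnt a l = 0"
  by (induction l) auto

lemma len3: "set l \<subseteq> {0,1,2} \<Longrightarrow> length l = cnt 0 l + cnt 1 l + cnt 2 l"
  by (induction l) auto

lemma abc_nth: "k < 3 * n \<Longrightarrow> abc n ! k = (if k < n then 0 else if k < 2 * n then 1 else 2)"
  by (auto simp: abc_def nth_append)

lemma no_both: 
  assumes w: "abc n = u @ f @ z" and lf: "length f < n"
  shows "0 \<notin> set f \<or> 2 \<notin> set f"
proof (rule ccontr)
  assume "\<not> ?thesis"
  then obtain j1 j2 where j: "j1 < length f" "f ! j1 = 0" "j2 < length f" "f ! j2 = 2"
    by (auto simp: in_set_conv_nth)
  have L: "length (abc n) = 3 * n" by (simp add: abc_def)
  have n1: "abc n ! (length u + j1) = 0" using j w by (simp add: nth_append)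
  have n2: "abc n ! (length u + j2) = 2" using j w by (simp add: nth_append)
  have l1: "length u + j1 < 3 * n" "length u + j2 < 3 * n" using L w j by auto
  have "length u + j1 < n" using n1 abc_nth[OF l1(1)] by (auto split: if_splits)
  moreover have "length u + j2 \<ge> 2 * n" using n2 abc_nth[OF l1(2)] by (auto split: if_splits)
  ultimately show False using j lf by linarith
qed

lemma pump_contra:
  assumes w: "abc n = u @ v @ x @ y @ z" and ne: "v @ y \<noteq> []" and lf: "length (v @ x @ y) < n"
  shows "\<not> (cnt 0 (u @ x @ z) = cnt 1 (u @ x @ z) \<and> cnt 1 (u @ x @ z) = cnt 2 (u @ x @ z))"
proof
  assume eq: "cnt 0 (u @ x @ z) = cnt 1 (u @ x @ z) \<and> cnt 1 (u @ x @ z) = cnt 2 (u @ x @ z)"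
  have c: "cnt a (abc n) = (if a \<in> {0,1,2} then n else 0)" for a by (auto simp: abc_def)
  have ca: "cnt a (abc n) = cnt a (u @ x @ z) + cnt a (v @ y)" for a using w by simp
  have "set (v @ y) \<subseteq> set (abc n)" using w by auto
  moreover have "set (abc n) \<subseteq> {0,1,2}" by (auto simp: abc_def)
  ultimately have sv: "set (v @ y) \<subseteq> {0,1,2}" by blast
  have lv: "length (v @ y) = cnt 0 (v @ y) + cnt 1 (v @ y) + cnt 2 (v @ y)" using len3[OF sv] .
  have "length (v @ y) > 0" using ne by simp
  have nb: "0 \<notin> set (v @ x @ y) \<or> 2 \<notin> set (v @ x @ y)" using no_both[of n u "v @ x @ y" z] w lf by simp
  have z0: "0 \<notin> set (v @ x @ y) \<Longrightarrow> cnt 0 (v @ y) = 0" by (simp add: cnt_zero)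
  have z2: "2 \<notin> set (v @ x @ y) \<Longrightarrow> cnt 2 (v @ y) = 0" by (simp add: cnt_zero)
  show False using nb z0 z2 ca[of 0] ca[of 1] ca[of 2] c[of 0] c[of 1] c[of 2] eq lv \<open>length (v @ y) > 0\<close>
    by auto
qed

lemma A0_not_CF: "grl_lang A0 \<notin> CF"
proof
  assume "grl_lang A0 \<in> CF"
  then obtain G where wf: "wf_cfg G" and eqL: "grl_lang A0 = cfg_lang G" unfolding CF_def by blast
  define m where "m = Max (insert 1 ((\<lambda>(A, \<alpha>). length \<alpha>) ` prods G))"
  have fin: "finite (prods G)" using wf by (simp add: wf_cfg_def)
  have m: "\<forall>(A,\<alpha>) \<in> prods G. length \<alpha> \<le> m" unfolding m_def using fin by (auto intro: Max_ge)
  have m1: "m \<ge> 1" unfolding m_def using fin by (auto intro: Max_ge)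
  define P where "P = m ^ card (nonterms G)"
  define n where "n = m * P + 1"
  have "abc n \<in> cfg_lang G" using abc_in eqL by auto
  then obtain t where t: "valid G t" "root t = Inl (start G)" "yield t = abc n" using lang_tree by blast
  have "P \<le> m * P" using m1 by simp
  moreover have "length (yield t) = 3 * (m * P) + 3" using t(3) by (simp add: abc_def n_def)
  ultimately have "length (yield t) > P" by linarith
  then obtain u v x y z t' where d: "yield t = u @ v @ x @ y @ z" "v @ y \<noteq> []" "length (v @ x @ y) \<le> m * P"
     "valid G t'" "root t' = Inl (start G)" "yield t' = u @ x @ z"
    using pump_down[OF wf m m1 t(1) t(2)] unfolding P_def by blast
  have "u @ x @ z \<in> cfg_lang G" using tree_in_lang[OF d(4) d(5)] d(6) by simp
  then have "u @ x @ z \<in> grl_lang A0" using eqL by simp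
  then have "cnt 0 (u @ x @ z) = cnt 1 (u @ x @ z) \<and> cnt 1 (u @ x @ z) = cnt 2 (u @ x @ z)" by (rule A0_lang_cnt)
  moreover have "length (v @ x @ y) < n" using d(3) n_def by simp
  ultimately show False using pump_contra[of n u v x y z] d(1,2) t(3) by simp
qed

lemma A0_GRLOWJ: "grl_lang A0 \<in> GRLOWJ"
  unfolding GRLOWJ_def using wf_A0 by blast


abbreviation rep :: "nat \<Rightarrow> nat list" where "rep n \<equiv> replicate n (0::nat)"
definition W :: "nat \<Rightarrow> nat \<Rightarrow> nat list" where "W i m = rep i @ 1 # rep m"

definition KA :: "grlowjfa \<Rightarrow> nat" where
  "KA A = Max (insert 0 ((\<lambda>(p, w, q). length w) ` rules A))"

lemma rule_len: "wf_grlowjfa A \<Longrightarrow> (p, w, q) \<in> rules A \<Longrightarrow> length w \<le> KA A \<and> w \<noteq> [] \<and> p \<in> states A \<and> q \<in> states A"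
proof -
  assume wf: "wf_grlowjfa A" and r: "(p, w, q) \<in> rules A"
  have fin: "finite (rules A)" using wf by (simp add: wf_grlowjfa_def)
  have "length w \<le> KA A" unfolding KA_def using fin r by (intro Max_ge) (auto intro: rev_image_eqI[of "(p, w, q)"])
  moreover have "w \<noteq> [] \<and> p \<in> states A \<and> q \<in> states A" using wf r unfolding wf_grlowjfa_def by blast
  ultimately show ?thesis by blast
qed

definition ovl :: "nat list \<Rightarrow> nat list \<Rightarrow> bool" where
  "ovl u x \<longleftrightarrow> (\<exists>u1 u2 x1 x2. u2 \<noteq> [] \<and> x1 \<noteq> [] \<and> u = u1 @ u2 \<and> x = x1 @ x2 \<and> u2 @ x1 = x)"

lemma move1: "(p, x, q) \<in> rules A \<Longrightarrow> no_rule_subword A p u \<Longrightarrow> \<not> ovl u x \<Longrightarrow>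
  ((t, p, u @ x @ v), (t @ u, q, v)) \<in> grl_move A"
  unfolding grl_move_def ovl_def by blast


lemma move_cases: "(c, c') \<in> grl_move A \<Longrightarrow>
  (\<exists>t u v x p q. c = (t, p, u @ x @ v) \<and> c' = (t @ u, q, v) \<and> (p, x, q) \<in> rules A \<and> no_rule_subword A p u \<and> \<not> ovl u x)
  \<or> (\<exists>x y p. c = (x, p, y) \<and> c' = ([], p, x @ y) \<and> x \<noteq> [] \<and> no_rule_subword A p y)"
proof -
  assume "(c, c') \<in> grl_move A"
  then show ?thesis unfolding grl_move_def
  proof (elim UnE)
    assume "(c, c') \<in> {((t, p, u @ x @ v), (t @ u, q, v)) | t u v x p q.
        (p, x, q) \<in> rules A \<and> no_rule_subword A p u \<and>
        \<not> (\<exists>u1 u2 x1 x2. u2 \<noteq> [] \<and> x1 \<noteq> [] \<and> u = u1 @ u2 \<and> x = x1 @ x2 \<and> u2 @ x1 = x)}"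
    then obtain t u v x p q where h: "c = (t, p, u @ x @ v)" "c' = (t @ u, q, v)" "(p, x, q) \<in> rules A"
       "no_rule_subword A p u" "\<not> ovl u x"
      unfolding ovl_def mem_Collect_eq by (elim exE conjE) simp
    show ?thesis by (rule disjI1) (use h in blast)
  next
    assume "(c, c') \<in> {((x, p, y), ([], p, x @ y)) | x y p. x \<noteq> [] \<and> no_rule_subword A p y}"
    then obtain x y p where h: "c = (x, p, y)" "c' = ([], p, x @ y)" "x \<noteq> []" "no_rule_subword A p y"
      unfolding mem_Collect_eq by (elim exE conjE) simp
    show ?thesis by (rule disjI2) (use h in blast)
  qed
qed

lemma nrs_Nil: "wf_grlowjfa A \<Longrightarrow> no_rule_subword A p []"
  unfolding no_rule_subword_def rule_words_def subword_def using rule_len by fastforce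

lemma del0: "wf_grlowjfa A \<Longrightarrow> (p, x, q) \<in> rules A \<Longrightarrow> ((t, p, x @ v), (t, q, v)) \<in> grl_move A"
  using move1[of p x q A "[]" t v] nrs_Nil[of A p] by (simp add: ovl_def)

inductive DelS :: "grlowjfa \<Rightarrow> nat set \<Rightarrow> nat \<Rightarrow> nat \<Rightarrow> nat \<Rightarrow> bool" for A where
  DelS0: "DelS A X p 0 p"
| DelSs: "p \<in> X \<Longrightarrow> (p, rep k, q) \<in> rules A \<Longrightarrow> DelS A X q d r \<Longrightarrow> DelS A X p (k + d) r"

lemma DelS_trans: "DelS A X p d1 q \<Longrightarrow> DelS A X q d2 r \<Longrightarrow> DelS A X p (d1 + d2) r"
  by (induction rule: DelS.induct) (auto simp: add.assoc intro: DelS.intros)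

lemma DelS_mono: "DelS A X p d q \<Longrightarrow> X \<subseteq> Y \<Longrightarrow> DelS A Y p d q"
  by (induction rule: DelS.induct) (auto intro: DelS.intros)

lemma DelS_split: "DelS A X q d r \<Longrightarrow> DelS A (X - {p}) q d r \<or> (\<exists>d1 d2. DelS A X q d1 p \<and> DelS A X p d2 r \<and> d = d1 + d2)"
proof (induction rule: DelS.induct)
  case (DelS0 X p) then show ?case by (auto intro: DelS.intros)
next
  case (DelSs q1 X k q2 d r)
  show ?case
  proof (cases "q1 = p")
    case True
    then show ?thesis using DelSs.hyps by (intro disjI2 exI[of _ 0] exI[of _ "k + d"]) (auto intro: DelS.intros)
  next
    case False
    from DelSs.IH show ?thesis
    proof
      assume "DelS A (X - {p}) q2 d r"
      then show ?thesis using False DelSs.hyps by (auto intro: DelS.intros)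
    next
      assume "\<exists>d1 d2. DelS A X q2 d1 p \<and> DelS A X p d2 r \<and> d = d1 + d2"
      then obtain d1 d2 where "DelS A X q2 d1 p" "DelS A X p d2 r" "d = d1 + d2" by blast
      then show ?thesis using DelSs.hyps
        by (intro disjI2 exI[of _ "k + d1"] exI[of _ d2]) (auto intro: DelS.intros)
    qed
  qed
qed

lemma DelS_inv: "DelS A X p d r \<Longrightarrow> d > 0 \<Longrightarrow> \<exists>k q d'. p \<in> X \<and> (p, rep k, q) \<in> rules A \<and> DelS A X q d' r \<and> d = k + d'"
  by (induction rule: DelS.induct) auto

lemma DelS_pump:
  assumes len: "\<forall>p w q. (p, w, q) \<in> rules A \<longrightarrow> 1 \<le> length w \<and> length w \<le> K"
  shows "finite X \<Longrightarrow> DelS A X p d r \<Longrightarrow> d > K * card X \<Longrightarrow> \<exists>D>0. DelS A X p (d + D) r"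
proof (induction "card X" arbitrary: X p d r)
  case 0
  then have "X = {}" by simp
  moreover have "d > 0" using 0 by simp
  ultimately show ?case using DelS_inv[OF 0(3)] by blast
next
  case (Suc n)
  have "d > 0" using Suc.prems(3) by simp
  then obtain k q d' where DelSs: "d = k + d'" "p \<in> X" "(p, rep k, q) \<in> rules A" "DelS A X q d' r"
    using DelS_inv[OF Suc.prems(2)] by blast
    have "1 \<le> length (rep k) \<and> length (rep k) \<le> K" using len DelSs(3) by blast
    then have k: "1 \<le> k" "k \<le> K" by simp_all
    from DelS_split[OF DelSs(4), of p] show ?case
    proof
      assume a: "DelS A (X - {p}) q d' r"
      have c: "card (X - {p}) = n" using Suc.hyps(2) DelSs(2) Suc.prems(1) by simp
      have "K * card X = K * n + K" using Suc.hyps(2)[symmetric] by simp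
      then have "d' > K * n" using Suc.prems(3) DelSs(1) k by linarith
      then have "\<exists>D>0. DelS A (X - {p}) q (d' + D) r"
        using Suc.hyps(1)[of "X - {p}" q d' r] c a Suc.prems(1) by auto
      then obtain D where "D > 0" "DelS A (X - {p}) q (d' + D) r" by blast
      then have "DelS A X q (d' + D) r" using DelS_mono[OF _ Diff_subset] by blast
      then have "DelS A X p (k + (d' + D)) r" by (rule DelS.DelSs[OF DelSs(2) DelSs(3)])
      moreover have "d + D = k + (d' + D)" using DelSs(1) by simp
      ultimately have "DelS A X p (d + D) r" by (metis add.assoc)
      then show ?thesis using \<open>D > 0\<close> by blast
    next
      assume "\<exists>d1 d2. DelS A X q d1 p \<and> DelS A X p d2 r \<and> d' = d1 + d2"
      then obtain d1 d2 where h: "DelS A X q d1 p" "DelS A X p d2 r" "d' = d1 + d2" by blast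
      have loop: "DelS A X p (k + d1) p" by (rule DelS.DelSs[OF DelSs(2) DelSs(3) h(1)])
      have "DelS A X p ((k + d1) + d) r" using DelS_trans[OF loop Suc.prems(2)] .
      then show ?thesis using k by (intro exI[of _ "k + d1"]) (simp add: add.commute)
    qed
qed

lemma DelS_run: "DelS A X p d q \<Longrightarrow> wf_grlowjfa A \<Longrightarrow> ((t, p, rep d @ s), (t, q, s)) \<in> (grl_move A)\<^sup>*"
proof (induction rule: DelS.induct)
  case (DelS0 X p) then show ?case by simp
next
  case (DelSs p X k q d r)
  have "((t, p, rep k @ (rep d @ s)), (t, q, rep d @ s)) \<in> grl_move A" using del0 DelSs by blast
  then show ?case using DelSs by (simp add: replicate_add converse_rtrancl_into_rtrancl)
qed


lemma pure_split: assumes "u @ v = replicate n a"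
  shows "u = replicate (length u) a" "v = replicate (length v) a"
proof -
  have "\<forall>y\<in>set (u @ v). y = a" unfolding assms by simp
  then show "u = replicate (length u) a" "v = replicate (length v) a"
    using replicate_length_same[of u a] replicate_length_same[of v a] by auto
qed

lemma pure_head: "wf_grlowjfa A \<Longrightarrow> (p, rep k, q) \<in> rules A \<Longrightarrow> no_rule_subword A p (rep r) \<Longrightarrow>
  \<not> ovl (rep r) (rep k) \<Longrightarrow> r = 0"
proof (rule ccontr)
  assume wf: "wf_grlowjfa A" and rl: "(p, rep k, q) \<in> rules A" and nr: "no_rule_subword A p (rep r)"
    and no: "\<not> ovl (rep r) (rep k)" and r0: "r \<noteq> 0"
  have k1: "k \<ge> 1" using rule_len[OF wf rl] by (cases k) auto
  show False
  proof (cases "k = 1")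
    case True
    have "rep k \<in> rule_words A p" using rl unfolding rule_words_def by blast
    moreover have "subword (rep k) (rep r)" unfolding subword_def using True r0
      by (intro exI[of _ "[]"] exI[of _ "rep (r - 1)"]) (cases r, auto)
    ultimately show False using nr unfolding no_rule_subword_def by blast
  next
    case False
    have "ovl (rep r) (rep k)" unfolding ovl_def
    proof (intro exI conjI)
      show "rep r = rep (r - 1) @ [0]" using r0 by (cases r) (auto simp: replicate_append_same)
      show "rep k = rep (k - 1) @ [0]" using k1 by (cases k) (auto simp: replicate_append_same)
      show "[0::nat] @ rep (k - 1) = rep k" using k1 by (cases k) auto
    qed (use False k1 in auto)
    then show False using no by blast
  qed
qed

lemma MA_pure: "wf_grlowjfa A \<Longrightarrow> ((t, p, rep \<beta>), c') \<in> grl_move A \<Longrightarrow>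
  (\<exists>k q. (p, rep k, q) \<in> rules A \<and> 1 \<le> k \<and> k \<le> \<beta> \<and> c' = (t, q, rep (\<beta> - k))) \<or>
  (t \<noteq> [] \<and> no_rule_subword A p (rep \<beta>) \<and> c' = ([], p, t @ rep \<beta>))"
proof -
  assume wf: "wf_grlowjfa A" and mv: "((t, p, rep \<beta>), c') \<in> grl_move A"
  from move_cases[OF mv] show ?thesis
  proof
    assume "\<exists>t' u v x p' q. (t, p, rep \<beta>) = (t', p', u @ x @ v) \<and> c' = (t' @ u, q, v) \<and> (p', x, q) \<in> rules A \<and> no_rule_subword A p' u \<and> \<not> ovl u x"
    then obtain u v x q where h: "rep \<beta> = u @ x @ v" "c' = (t @ u, q, v)" "(p, x, q) \<in> rules A"
      "no_rule_subword A p u" "\<not> ovl u x" by auto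
    have pu: "u = rep (length u)" using pure_split(1)[OF h(1)[symmetric]] .
    have pxv: "x @ v = rep (length (x @ v))" using pure_split(2)[OF h(1)[symmetric]] .
    have px: "x = rep (length x)" and pv: "v = rep (length v)" using pure_split[OF pxv] by auto
    have "length u = 0" using pure_head[OF wf, of p "length x" q "length u"] h pu px by simp
    then have u0: "u = []" by simp
    have lx: "1 \<le> length x" using rule_len[OF wf h(3)] by (cases x) auto
    have lv: "length v = \<beta> - length x" "length x \<le> \<beta>" using arg_cong[OF h(1), of length] u0 by simp_all
    have r: "(p, rep (length x), q) \<in> rules A" using h(3) px by simp
    have "c' = (t, q, rep (\<beta> - length x))" using h(2) u0 pv lv by simp
    then show ?thesis using r lx lv by blast
  next
    assume "\<exists>x y p'. (t, p, rep \<beta>) = (x, p', y) \<and> c' = ([], p', x @ y) \<and> x \<noteq> [] \<and> no_rule_subword A p' y"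
    then show ?thesis by auto
  qed
qed

lemma take_W: "take j (W i m) = (if j \<le> i then rep j else rep i @ 1 # rep (min (j - i - 1) m))"
  unfolding W_def by (cases "j \<le> i") (auto simp: take_Cons' min_def)

lemma drop_W: "drop j (W i m) = (if j \<le> i then W (i - j) m else rep (m - (j - i - 1)))"
  unfolding W_def by (cases "j \<le> i") (auto simp: drop_Cons')

lemma length_W[simp]: "length (W i m) = i + 1 + m"
  by (simp add: W_def)

lemma W_ne[simp]: "W i m \<noteq> []"
  by (simp add: W_def)

lemma MA_mid: "wf_grlowjfa A \<Longrightarrow> KA A \<le> i \<Longrightarrow> (([], p, W i m), c') \<in> grl_move A \<Longrightarrow>
  (\<exists>k q. (p, rep k, q) \<in> rules A \<and> 1 \<le> k \<and> k \<le> i \<and> c' = ([], q, W (i - k) m)) \<or>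
  (\<exists>r s l q. (p, W s l, q) \<in> rules A \<and> r + s = i \<and> l \<le> m \<and> no_rule_subword A p (rep r) \<and> c' = (rep r, q, rep (m - l)))"
proof -
  assume wf: "wf_grlowjfa A" and Ki: "KA A \<le> i" and mv: "(([], p, W i m), c') \<in> grl_move A"
  from move_cases[OF mv] show ?thesis
  proof
    assume "\<exists>t' u v x p' q. ([], p, W i m) = (t', p', u @ x @ v) \<and> c' = (t' @ u, q, v) \<and> (p', x, q) \<in> rules A \<and> no_rule_subword A p' u \<and> \<not> ovl u x"
    then obtain u v x q where h: "W i m = u @ x @ v" "c' = (u, q, v)" "(p, x, q) \<in> rules A"
      "no_rule_subword A p u" "\<not> ovl u x" by auto
    define j where "j = length u"
    define lx where "lx = length x"
    have u: "u = take j (W i m)" using h(1) j_def by simp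
    have xv: "x @ v = drop j (W i m)" using h(1) j_def by simp
    have x: "x = take lx (drop j (W i m))" using xv lx_def by (metis append_eq_conv_conj)
    have v: "v = drop lx (drop j (W i m))" using xv lx_def by (metis append_eq_conv_conj)
    have rl: "lx \<le> KA A" "x \<noteq> []" using rule_len[OF wf h(3)] lx_def by auto
    show ?thesis
    proof (cases "j \<le> i")
      case False
      then have "x @ v = rep (m - (j - i - 1))" using xv drop_W by simp
      then have px: "x = rep lx" using pure_split(1) lx_def by metis
      have "u = rep i @ 1 # rep (min (j - i - 1) m)" using u take_W False by simp
      then have "u = [] @ x @ (rep (i - lx) @ 1 # rep (min (j - i - 1) m))"
        using px rl Ki by (simp add: replicate_add[symmetric])
      then have "subword x u" unfolding subword_def by blast
      moreover have "x \<in> rule_words A p" using h(3) unfolding rule_words_def by blast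
      ultimately show ?thesis using h(4) unfolding no_rule_subword_def by blast
    next
      case True
      then have uj: "u = rep j" using u take_W by simp
      have xv2: "x @ v = W (i - j) m" using xv drop_W True by simp
      show ?thesis
      proof (cases "lx \<le> i - j")
        case True
        then have px: "x = rep lx" using x drop_W take_W \<open>j \<le> i\<close> by simp
        have "j = 0" using pure_head[OF wf, of p lx q j] h uj px by simp
        then have "v = W (i - lx) m" using v drop_W True by simp
        then show ?thesis using h uj px rl \<open>j = 0\<close> True
          by (intro disjI1 exI[of _ lx] exI[of _ q]) (auto simp: Suc_le_eq intro: Nat.gr0I)
      next
        case False
        define l where "l = lx - (i - j) - 1"
        have len: "lx + length v = i - j + 1 + m" using arg_cong[OF xv2, of length] lx_def by simp
        have lm: "l \<le> m" using len False l_def by linarith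
        have "x = take lx (W (i - j) m)" using x drop_W \<open>j \<le> i\<close> by simp
        also have "\<dots> = rep (i - j) @ 1 # rep (min (lx - (i - j) - 1) m)" using take_W[of lx "i - j" m] False by simp
        also have "\<dots> = W (i - j) l" using lm l_def by (simp add: W_def min_def)
        finally have px: "x = W (i - j) l" .
        have pv: "v = rep (m - l)" using v drop_W \<open>j \<le> i\<close> False l_def by (simp add: drop_W)
        show ?thesis using h uj px pv lm \<open>j \<le> i\<close>
          by (intro disjI2 exI[of _ j] exI[of _ "i - j"] exI[of _ l] exI[of _ q]) auto
      qed
    qed
  next
    assume "\<exists>x y p'. ([], p, W i m) = (x, p', y) \<and> c' = ([], p', x @ y) \<and> x \<noteq> [] \<and> no_rule_subword A p' y"
    then show ?thesis by auto
  qed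
qed


lemma nrs_down: "no_rule_subword A p (rep b) \<Longrightarrow> b' \<le> b \<Longrightarrow> no_rule_subword A p (rep b')"
proof -
  assume nr: "no_rule_subword A p (rep b)" and le: "b' \<le> b"
  have "rep b = rep b' @ rep (b - b')" using le by (simp add: replicate_add[symmetric])
  then have "subword w (rep b') \<Longrightarrow> subword w (rep b)" for w
    unfolding subword_def by (metis append.assoc)
  then show ?thesis using nr unfolding no_rule_subword_def by blast
qed

lemma nrs_up: "wf_grlowjfa A \<Longrightarrow> no_rule_subword A p (rep r) \<Longrightarrow> KA A \<le> r \<Longrightarrow> no_rule_subword A p (rep r')"
proof -
  assume wf: "wf_grlowjfa A" and nr: "no_rule_subword A p (rep r)" and K: "KA A \<le> r"
  show ?thesis unfolding no_rule_subword_def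
  proof (intro ballI notI)
    fix w assume w: "w \<in> rule_words A p" and sw: "subword w (rep r')"
    then obtain a b where "rep r' = a @ w @ b" unfolding subword_def by blast
    then have pw: "w = rep (length w)" using pure_split by metis
    obtain q where "(p, w, q) \<in> rules A" using w unfolding rule_words_def by blast
    then have "length w \<le> r" using rule_len[OF wf] K by fastforce
    then have "rep r = [] @ w @ rep (r - length w)" using pw by (metis append_Nil replicate_add le_add_diff_inverse)
    then have "subword w (rep r)" unfolding subword_def by blast
    then show False using nr w unfolding no_rule_subword_def by blast
  qed
qed

lemma no_ovl: "\<not> ovl (rep r) (W s l)"
proof
  assume "ovl (rep r) (W s l)"
  then obtain u1 u2 x1 x2 where h: "u2 \<noteq> []" "x1 \<noteq> []" "rep r = u1 @ u2" "W s l = x1 @ x2" "u2 @ x1 = W s l"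
    unfolding ovl_def by blast
  have pu: "u2 = rep (length u2)" using pure_split(2)[OF h(3)[symmetric]] .
  define j where "j = length u2"
  have j1: "j \<ge> 1" using h(1) j_def by (cases u2) auto
  have Ws: "W s l ! s = 1" by (simp add: W_def nth_append)
  have e: "W s l = rep j @ x1" using h(5) pu j_def by simp
  show False
  proof (cases "s < j")
    case True
    then have "W s l ! s = 0" using e by (simp add: nth_append)
    then show False using Ws by simp
  next
    case False
    have lx1: "length x1 = s + 1 + l - j" using arg_cong[OF e, of length] by simp
    have "W s l ! s = x1 ! (s - j)" using e False by (simp add: nth_append)
    also have "\<dots> = (x1 @ x2) ! (s - j)"
    proof -
      have "s - j < length x1" using lx1 False by simp
      then show ?thesis by (simp add: nth_append)
    qed
    also have "\<dots> = W s l ! (s - j)" using h(4) by simp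
    also have "\<dots> = 0" using j1 False by (simp add: W_def nth_append)
    finally show False using Ws by simp
  qed
qed

lemma cross: "(p, W s l, q) \<in> rules A \<Longrightarrow> no_rule_subword A p (rep r) \<Longrightarrow> l \<le> m \<Longrightarrow>
  (([], p, W (r + s) m), (rep r, q, rep (m - l))) \<in> grl_move A"
proof -
  assume a: "(p, W s l, q) \<in> rules A" "no_rule_subword A p (rep r)" "l \<le> m"
  have "W (r + s) m = rep r @ W s l @ rep (m - l)"
    using a(3) by (simp add: W_def replicate_add[symmetric])
  then show ?thesis using move1[OF a(1) a(2) no_ovl, of "[]" "rep (m - l)"] by simp
qed

definition acc :: "grlowjfa \<Rightarrow> config \<Rightarrow> bool" where
  "acc A c \<longleftrightarrow> (\<exists>qf\<in>finals A. (c, ([], qf, [])) \<in> (grl_move A)\<^sup>*)"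

lemma acc_pre: "(c, c') \<in> (grl_move A)\<^sup>* \<Longrightarrow> acc A c' \<Longrightarrow> acc A c"
  unfolding acc_def by (meson rtrancl_trans)

lemma acc_pre1: "(c, c') \<in> grl_move A \<Longrightarrow> acc A c' \<Longrightarrow> acc A c"
  using acc_pre by blast

lemma acc_inv: "acc A c \<Longrightarrow> (\<exists>qf\<in>finals A. c = ([], qf, [])) \<or> (\<exists>c'. (c, c') \<in> grl_move A \<and> acc A c')"
  unfolding acc_def by (metis converse_rtranclE)

lemma F3: "wf_grlowjfa A \<Longrightarrow> 1 \<le> \<alpha> \<Longrightarrow> acc A (rep \<alpha>, q, rep \<beta>) \<Longrightarrow>
  \<exists>q' \<beta>'. \<beta>' \<le> \<beta> \<and> DelS A (states A) q (\<beta> - \<beta>') q' \<and> no_rule_subword A q' (rep \<beta>') \<and> acc A ([], q', rep (\<alpha> + \<beta>'))"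
proof (induction \<beta> arbitrary: q rule: less_induct)
  case (less \<beta>)
  have "rep \<alpha> \<noteq> []" using less.prems(2) by simp
  then obtain c' where c': "((rep \<alpha>, q, rep \<beta>), c') \<in> grl_move A" "acc A c'"
    using acc_inv[OF less.prems(3)] by auto
  from MA_pure[OF less.prems(1) c'(1)] show ?case
  proof
    assume "\<exists>k q1. (q, rep k, q1) \<in> rules A \<and> 1 \<le> k \<and> k \<le> \<beta> \<and> c' = (rep \<alpha>, q1, rep (\<beta> - k))"
    then obtain k q1 where h: "(q, rep k, q1) \<in> rules A" "1 \<le> k" "k \<le> \<beta>" "c' = (rep \<alpha>, q1, rep (\<beta> - k))" by blast
    have "\<beta> - k < \<beta>" using h by simp
    then obtain q' \<beta>' where ih: "\<beta>' \<le> \<beta> - k" "DelS A (states A) q1 (\<beta> - k - \<beta>') q'"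
      "no_rule_subword A q' (rep \<beta>')" "acc A ([], q', rep (\<alpha> + \<beta>'))"
      using less.IH[of "\<beta> - k" q1] less.prems c' h by blast
    have qs: "q \<in> states A" using rule_len[OF less.prems(1) h(1)] by blast
    have "DelS A (states A) q (k + (\<beta> - k - \<beta>')) q'" by (rule DelS.DelSs[OF qs h(1) ih(2)])
    moreover have "k + (\<beta> - k - \<beta>') = \<beta> - \<beta>'" using ih(1) h(3) by simp
    ultimately show ?thesis using ih by (intro exI[of _ q'] exI[of _ \<beta>']) auto
  next
    assume "rep \<alpha> \<noteq> [] \<and> no_rule_subword A q (rep \<beta>) \<and> c' = ([], q, rep \<alpha> @ rep \<beta>)"
    then show ?thesis using c'(2) by (intro exI[of _ q] exI[of _ \<beta>]) (auto intro: DelS.DelS0 simp: replicate_add)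
  qed
qed

lemma phase1: "wf_grlowjfa A \<Longrightarrow> acc A ([], p, W i m) \<Longrightarrow>
  \<exists>p' i'. i' \<le> i \<and> DelS A (states A) p (i - i') p' \<and> acc A ([], p', W i' m) \<and>
    (i' < 2 * KA A \<or> (\<exists>r s l q. (p', W s l, q) \<in> rules A \<and> r + s = i' \<and> l \<le> m \<and>
        no_rule_subword A p' (rep r) \<and> acc A (rep r, q, rep (m - l))))"
proof (induction i arbitrary: p rule: less_induct)
  case (less i)
  show ?case
  proof (cases "i < 2 * KA A")
    case True
    then show ?thesis using less.prems by (intro exI[of _ p] exI[of _ i]) (auto intro: DelS.DelS0)
  next
    case False
    obtain c' where c': "(([], p, W i m), c') \<in> grl_move A" "acc A c'"
      using acc_inv[OF less.prems(2)] by auto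
    have Ki: "KA A \<le> i" using False by simp
    from MA_mid[OF less.prems(1) Ki c'(1)] show ?thesis
    proof
      assume "\<exists>k q. (p, rep k, q) \<in> rules A \<and> 1 \<le> k \<and> k \<le> i \<and> c' = ([], q, W (i - k) m)"
      then obtain k q where h: "(p, rep k, q) \<in> rules A" "1 \<le> k" "k \<le> i" "c' = ([], q, W (i - k) m)" by blast
      have "i - k < i" using h by simp
      then obtain p' i' where ih: "i' \<le> i - k" "DelS A (states A) q (i - k - i') p'" "acc A ([], p', W i' m)"
        "(i' < 2 * KA A \<or> (\<exists>r s l q. (p', W s l, q) \<in> rules A \<and> r + s = i' \<and> l \<le> m \<and>
        no_rule_subword A p' (rep r) \<and> acc A (rep r, q, rep (m - l))))"
        using less.IH[of "i - k" q] less.prems c' h by blast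
      have ps: "p \<in> states A" using rule_len[OF less.prems(1) h(1)] by blast
      have "DelS A (states A) p (k + (i - k - i')) p'" by (rule DelS.DelSs[OF ps h(1) ih(2)])
      moreover have "k + (i - k - i') = i - i'" using ih(1) h(3) by simp
      ultimately show ?thesis using ih by (intro exI[of _ p'] exI[of _ i']) auto
    next
      assume "\<exists>r s l q. (p, W s l, q) \<in> rules A \<and> r + s = i \<and> l \<le> m \<and> no_rule_subword A p (rep r) \<and> c' = (rep r, q, rep (m - l))"
      then show ?thesis using c'(2) less.prems by (intro exI[of _ p] exI[of _ i]) (auto intro: DelS.DelS0)
    qed
  qed
qed


lemma repW: "rep a @ W b m = W (a + b) m"
  by (simp add: W_def replicate_add)

lemma main_aut:
  assumes wf: "wf_grlowjfa A" and accn: "acc A ([], init A, W n n)"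
    and n: "n = 2 * KA A + KA A * card (states A) + 1"
  shows "\<exists>i j. i \<noteq> j \<and> acc A ([], init A, W i j)"
proof -
  define K where "K = KA A"
  define N where "N = card (states A)"
  have fin: "finite (states A)" using wf by (simp add: wf_grlowjfa_def)
  have len: "\<forall>p w q. (p, w, q) \<in> rules A \<longrightarrow> 1 \<le> length w \<and> length w \<le> K"
  proof (intro allI impI)
    fix p w q assume "(p, w, q) \<in> rules A"
    then show "1 \<le> length w \<and> length w \<le> K" using rule_len[OF wf] K_def by (cases w) fastforce+
  qed
  obtain p' i' where ph: "i' \<le> n" "DelS A (states A) (init A) (n - i') p'" "acc A ([], p', W i' n)"
    "i' < 2 * K \<or> (\<exists>r s l q. (p', W s l, q) \<in> rules A \<and> r + s = i' \<and> l \<le> n \<and>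
        no_rule_subword A p' (rep r) \<and> acc A (rep r, q, rep (n - l)))"
    using phase1[OF wf accn] K_def by blast
  have run1: "(([], init A, W (n - i' + b) m), ([], p', W b m)) \<in> (grl_move A)\<^sup>*" for b m
    using DelS_run[OF ph(2) wf, of "[]" "W b m"] by (simp add: repW)
  show ?thesis
  proof (cases "i' < 2 * K")
    case True
    have "n - i' > K * N" using True n K_def N_def by simp
    then obtain D where D: "D > 0" "DelS A (states A) (init A) (n - i' + D) p'"
      using DelS_pump[OF len fin ph(2)] N_def by blast
    have "(([], init A, W (n - i' + D + i') n), ([], p', W i' n)) \<in> (grl_move A)\<^sup>*"
      using DelS_run[OF D(2) wf, of "[]" "W i' n"] by (simp add: repW)
    moreover have "n - i' + D + i' = n + D" using ph(1) by simp
    ultimately have "acc A ([], init A, W (n + D) n)" using acc_pre ph(3) by metis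
    then show ?thesis using D(1) by (intro exI[of _ "n + D"] exI[of _ n]) simp
  next
    case False
    then obtain r s l q where c: "(p', W s l, q) \<in> rules A" "r + s = i'" "l \<le> n"
        "no_rule_subword A p' (rep r)" "acc A (rep r, q, rep (n - l))"
      using ph(4) by blast
    have "length (W s l) \<le> K" using rule_len[OF wf c(1)] K_def by simp
    then have sl: "s + 1 + l \<le> K" by simp
    have rK: "r \<ge> K + 1" using sl c(2) False by linarith
    obtain q' \<beta>' where f: "\<beta>' \<le> n - l" "DelS A (states A) q (n - l - \<beta>') q'"
        "no_rule_subword A q' (rep \<beta>')" "acc A ([], q', rep (r + \<beta>'))"
      using F3[OF wf _ c(5)] rK by force
    show ?thesis
    proof (cases "\<beta>' = 0")
      case True
      have nK: "n = 2 * K + K * N + 1" using n K_def N_def by simp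
      have "n - l > K * N" using sl nK by linarith
      moreover have f2: "DelS A (states A) q (n - l) q'" using f(2) True by simp
      ultimately have "\<exists>D>0. DelS A (states A) q (n - l + D) q'"
        using DelS_pump[OF len fin f2] N_def by blast
      then obtain D where D: "D > 0" "DelS A (states A) q (n - l + D) q'" by blast
      have s1: "(([], init A, W n (n + D)), ([], p', W i' (n + D))) \<in> (grl_move A)\<^sup>*"
        using run1[of i' "n + D"] ph(1) by simp
      have s2: "(([], p', W i' (n + D)), (rep r, q, rep (n + D - l))) \<in> grl_move A"
        using cross[OF c(1) c(4), of "n + D"] c(2,3) by simp
      have s3: "((rep r, q, rep (n + D - l)), (rep r, q', [])) \<in> (grl_move A)\<^sup>*"
        using DelS_run[OF D(2) wf, of "rep r" "[]"] c(3) by (simp add: add.commute)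
      have s4: "((rep r, q', []), ([], q', rep r)) \<in> grl_move A"
        using jump[of "rep r" A q' "[]"] f(3) True rK by simp
      have "acc A ([], init A, W n (n + D))"
        using acc_pre[OF s1 acc_pre1[OF s2 acc_pre[OF s3 acc_pre1[OF s4]]]] f(4) True by simp
      then show ?thesis using D(1) by (intro exI[of _ n] exI[of _ "n + D"]) simp
    next
      case False
      have l1: "l \<le> n - 1" using f(1) False by simp
      have s1: "(([], init A, W (n + 1) (n - 1)), ([], p', W (i' + 1) (n - 1))) \<in> (grl_move A)\<^sup>*"
        using run1[of "i' + 1" "n - 1"] ph(1) by simp
      have Kr: "KA A \<le> r" using rK K_def by simp
      have nr: "no_rule_subword A p' (rep (r + 1))" by (rule nrs_up[OF wf c(4) Kr])
      have s2: "(([], p', W (i' + 1) (n - 1)), (rep (r + 1), q, rep (n - 1 - l))) \<in> grl_move A"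
        using cross[OF c(1) nr l1] c(2) by simp
      have e: "rep (n - 1 - l) = rep (n - l - \<beta>') @ rep (\<beta>' - 1)"
        using f(1) False by (simp add: replicate_add[symmetric])
      have s3: "((rep (r + 1), q, rep (n - 1 - l)), (rep (r + 1), q', rep (\<beta>' - 1))) \<in> (grl_move A)\<^sup>*"
        unfolding e by (rule DelS_run[OF f(2) wf])
      have s4: "((rep (r + 1), q', rep (\<beta>' - 1)), ([], q', rep (r + 1) @ rep (\<beta>' - 1))) \<in> grl_move A"
        using jump[of "rep (r + 1)" A q' "rep (\<beta>' - 1)"] nrs_down[OF f(3), of "\<beta>' - 1"] by simp
      have e2: "r + 1 + (\<beta>' - 1) = r + \<beta>'" using False by simp
      have "rep (r + 1) @ rep (\<beta>' - 1) = rep (r + \<beta>')" by (simp only: replicate_add[symmetric] e2)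
      then have "acc A ([], init A, W (n + 1) (n - 1))"
        using acc_pre[OF s1 acc_pre1[OF s2 acc_pre[OF s3 acc_pre1[OF s4]]]] f(4) by simp
      then show ?thesis by (intro exI[of _ "n + 1"] exI[of _ "n - 1"]) (simp add: n)
    qed
  qed
qed

definition G1 :: cfg where
  "G1 = \<lparr>nonterms = {0}, terms = {0, 1}, prods = {(0, [Inr 0, Inl 0, Inr 0]), (0, [Inr 1])}, start = 0\<rparr>"

lemma wf_G1: "wf_cfg G1"
  unfolding wf_cfg_def G1_def by auto

fun TT :: "nat \<Rightarrow> tree" where
  "TT 0 = Nd 0 [Lf 1]"
| "TT (Suc n) = Nd 0 [Lf 0, TT n, Lf 0]"

lemma TT: "valid G1 (TT n) \<and> root (TT n) = Inl 0 \<and> yield (TT n) = W n n"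
  by (induction n) (auto simp: G1_def W_def replicate_append_same)

lemma G1_in: "W n n \<in> cfg_lang G1"
  using tree_in_lang[of G1 "TT n"] TT[of n] by (simp add: G1_def)

lemma root_Inr: "root t = Inr a \<Longrightarrow> t = Lf a"
  by (cases t) auto

lemma G1_trees: "valid G1 t \<Longrightarrow> root t = Inl 0 \<Longrightarrow> \<exists>n. yield t = W n n"
proof (induction t)
  case (Lf x) then show ?case by simp
next
  case (Nd A ts)
  have "(A, map root ts) \<in> prods G1" using Nd.prems by simp
  then have "map root ts = [Inr 0, Inl 0, Inr 0] \<or> map root ts = [Inr 1]" by (auto simp: G1_def)
  then show ?case
  proof
    assume "map root ts = [Inr 0, Inl 0, Inr 0]"
    then obtain t1 t2 t3 where ts: "ts = [t1, t2, t3]" "root t1 = Inr 0" "root t2 = Inl 0" "root t3 = Inr 0"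
      by (auto simp: map_eq_Cons_conv)
    then have "t1 = Lf 0" "t3 = Lf 0" using root_Inr by auto
    moreover obtain k where "yield t2 = W k k" using Nd.IH[of t2] Nd.prems ts by auto
    ultimately have "yield (Nd A ts) = W (Suc k) (Suc k)" using ts
      by (simp add: W_def replicate_append_same)
    then show ?thesis by blast
  next
    assume "map root ts = [Inr 1]"
    then obtain t1 where ts: "ts = [t1]" "root t1 = Inr 1" by (auto simp: map_eq_Cons_conv)
    then have "t1 = Lf 1" using root_Inr[OF ts(2)] by simp
    then have "yield (Nd A ts) = W 0 0" using ts by (simp add: W_def)
    then show ?thesis by blast
  qed
qed

lemma G1_only: "w \<in> cfg_lang G1 \<Longrightarrow> \<exists>n. w = W n n"
  using lang_tree[of w G1] G1_trees by (fastforce simp: G1_def)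

lemma W_inj: "W i j = W i' j' \<Longrightarrow> i = i' \<and> j = j'"
proof -
  assume e: "W i j = W i' j'"
  have "i = i'"
  proof (rule ccontr)
    assume "i \<noteq> i'"
    then consider "i < i'" | "i' < i" by linarith
    then show False
    proof cases
      case 1
      have "W i j ! i = 1" by (simp add: W_def nth_append)
      moreover have "W i' j' ! i = 0" using 1 by (simp add: W_def nth_append)
      ultimately show False using e by simp
    next
      case 2
      have "W i' j' ! i' = 1" by (simp add: W_def nth_append)
      moreover have "W i j ! i' = 0" using 2 by (simp add: W_def nth_append)
      ultimately show False using e by simp
    qed
  qed
  moreover then have "j = j'" using arg_cong[OF e, of length] by simp
  ultimately show ?thesis by blast
qed

lemma G1_not: "cfg_lang G1 \<notin> GRLOWJ"
proof
  assume "cfg_lang G1 \<in> GRLOWJ"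
  then obtain A where wf: "wf_grlowjfa A" and eq: "cfg_lang G1 = grl_lang A" unfolding GRLOWJ_def by blast
  define n where "n = 2 * KA A + KA A * card (states A) + 1"
  have "W n n \<in> grl_lang A" using G1_in eq by auto
  then have al: "W n n \<in> lists (alph A)" and ac: "acc A ([], init A, W n n)"
    unfolding grl_lang_def acc_def by auto
  obtain i j where ij: "i \<noteq> j" "acc A ([], init A, W i j)" using main_aut[OF wf ac n_def] by blast
  have "0 \<in> alph A" "1 \<in> alph A" using al n_def by (auto simp: W_def)
  then have "W i j \<in> lists (alph A)" by (auto simp: W_def)
  then have "W i j \<in> grl_lang A" using ij(2) unfolding grl_lang_def acc_def by auto
  then have "W i j \<in> cfg_lang G1" using eq by simp
  then obtain k where "W i j = W k k" using G1_only by blast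
  then show False using W_inj ij(1) by blast
qed

theorem proposition4:
  shows "\<not> (CF \<subseteq> GRLOWJ) \<and> \<not> (GRLOWJ \<subseteq> CF)"
proof
  have "cfg_lang G1 \<in> CF" unfolding CF_def using wf_G1 by blast
  then show "\<not> (CF \<subseteq> GRLOWJ)" using G1_not by blast
next
  show "\<not> (GRLOWJ \<subseteq> CF)" using A0_GRLOWJ A0_not_CF by blast
qed

end
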